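(* Let $v_1,\dots,v_n\in\mathbb{R}^d$, $x\in[0,1]^n$ with $\sum_i x(i)=q$, and $X=\sum_i x(i)v_iv_i^\top$ with $\lambda_{\min}(X)>0$; let $\lambda_{\mathrm{avg}}(X)=\operatorname{tr}(X)/d$. Let $S\subseteq[n]$ with $|S|=b$, $Z=\sum_{i\in S}v_iv_i^\top$, and $0<\varepsilon<\frac12$. Set $\alpha=\frac{\sqrt d}{\varepsilon\lambda_{\min}(X)}$, let $A=(\alpha Z-\ell I)^{-2}$ where $\ell\in\mathbb{R}$ is the unique scalar with $\alpha Z-\ell I\succ0$ and $\operatorname{tr}(A)=1$, let $S'=\{i\in S:2\alpha\langle v_iv_i^\top,A^{1/2}\rangle<1\}$ and \[ \Phi(i,j)=\frac{\langle v_jv_j^\top,A\rangle}{1+2\alpha\langle v_jv_j^\top,A^{1/2}\rangle}-\frac{\langle v_iv_i^\top,A\rangle}{1-2\alpha\langle v_iv_i^\top,A^{1/2}\rangle}. \] If $\lambda_{\min}(Z)\le(1-2\varepsilon)\lambda_{\min}(X)$ and $b\ge q+2\big(d+\frac d\varepsilon\big)+\frac{2d}{\varepsilon}\sqrt{\frac{\lambda_{\mathrm{avg}}(X)}{\lambda_{\min}(X)}}$, then there exist $i\in S'$ and $j\in[n]\setminus S$ with $\Phi(i,j)\ge\frac{\varepsilon}{b}\lambda_{\min}(X)$ (equivalently, $\max_{i\in S',\,j\in[n]\setminus S}\Phi(i,j)\ge\frac\varepsilon b\lambda_{\min}(X)$).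
   Context: For symmetric matrices $\langle A,B\rangle=\operatorname{tr}(AB)$. *)

theory Defs
  imports "HOL-Analysis.Analysis"
begin

text \<open>Real symmetric d x d matrices, with d = CARD('d).\<close>

definition sym_mat :: "real^'d^'d \<Rightarrow> bool" where
  "sym_mat M \<longleftrightarrow> transpose M = M"

definition psd :: "real^'d^'d \<Rightarrow> bool" where
  "psd M \<longleftrightarrow> sym_mat M \<and> (\<forall>x. 0 \<le> x \<bullet> (M *v x))"

definition pd :: "real^'d^'d \<Rightarrow> bool" where
  "pd M \<longleftrightarrow> sym_mat M \<and> (\<forall>x. x \<noteq> 0 \<longrightarrow> 0 < x \<bullet> (M *v x))"

definition eigenvalues :: "real^'d^'d \<Rightarrow> real set" where
  "eigenvalues M = {c. \<exists>v. v \<noteq> 0 \<and> M *v v = c *\<^sub>R v}"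

definition lambda_min :: "real^'d^'d \<Rightarrow> real" where
  "lambda_min M = Min (eigenvalues M)"

definition lambda_avg :: "real^'d^'d \<Rightarrow> real" where
  "lambda_avg M = trace M / real CARD('d)"

definition mat_inner :: "real^'d^'d \<Rightarrow> real^'d^'d \<Rightarrow> real" where
  "mat_inner M N = trace (M ** N)"

definition outer :: "real^'d \<Rightarrow> real^'d^'d" where
  "outer v = (\<chi> i j. v $ i * v $ j)"

definition psd_sqrt :: "real^'d^'d \<Rightarrow> real^'d^'d" where
  "psd_sqrt M = (THE B. psd B \<and> B ** B = M)"

end

theory Submission
  imports Defs
begin


lemma sym_dot: "sym_mat M \<Longrightarrow> x \<bullet> (M *v y) = (M *v x) \<bullet> y"
  by (metis dot_lmul_matrix transpose_matrix_vector sym_mat_def)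

lemma sym_dot2: "sym_mat M \<Longrightarrow> x \<bullet> (M *v y) = y \<bullet> (M *v x)"
  by (metis sym_dot inner_commute)

lemma sym_mat_iff: "sym_mat M \<longleftrightarrow> (\<forall>i j. M$i$j = M$j$i)"
  unfolding sym_mat_def transpose_def vec_eq_iff by auto

lemma psd_kernel:
  fixes P :: "real^'d^'d"
  assumes s: "sym_mat P" and nn: "\<And>y. 0 \<le> y \<bullet> (P *v y)" and z: "x \<bullet> (P *v x) = 0"
  shows "P *v x = 0"
proof -
  define w where "w = P *v x"
  define k where "k = w \<bullet> (P *v w)"
  define W where "W = w \<bullet> w"
  have k0: "0 \<le> k" using nn k_def by auto
  have exp: "(x + t *\<^sub>R w) \<bullet> (P *v (x + t *\<^sub>R w)) = 2 * t * W + t^2 * k" for t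
  proof -
    have "(x + t *\<^sub>R w) \<bullet> (P *v (x + t *\<^sub>R w)) =
       x \<bullet> (P *v x) + t * (x \<bullet> (P *v w)) + t * (w \<bullet> (P *v x)) + t*t*(w \<bullet> (P *v w))"
      by (simp add: matrix_vector_right_distrib matrix_vector_mult_scaleR inner_add_left inner_add_right algebra_simps)
    also have "x \<bullet> (P *v w) = w \<bullet> (P *v x)" using sym_dot2[OF s] by blast
    finally show ?thesis using z by (simp add: w_def W_def k_def power2_eq_square)
  qed
  define t where "t = - W / (k + 1)"
  have "0 \<le> 2 * t * W + t^2 * k" using exp nn by metis
  moreover have W0: "0 \<le> W" by (simp add: W_def)
  ultimately have "W \<le> 0"
  proof -
    assume h: "0 \<le> 2 * t * W + t^2 * k"
    have kp: "k + 1 > 0" using k0 by simp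
    have ht: "t * (k+1) = - W" unfolding t_def using kp by simp
    have "(k+1)^2 * (2 * t * W + t^2 * k) = 2*W*(k+1)*(t*(k+1)) + (t*(k+1))^2*k"
      by (simp add: algebra_simps power2_eq_square)
    also have "\<dots> = (W*W) * (-2 * (k+1) + k)" unfolding ht by (simp add: algebra_simps power2_eq_square)
    finally have "0 \<le> (W*W) * (-2 * (k+1) + k)" using h kp by (metis zero_le_mult_iff zero_le_power2)
    hence "(W*W)*(k+2) \<le> 0" by (simp add: algebra_simps)
    hence "W*W \<le> 0" using kp by (simp add: mult_le_0_iff)
    thus "W \<le> 0" using W0 by (simp add: mult_le_0_iff)
  qed
  hence "W = 0" using W0 by simp
  thus ?thesis by (simp add: W_def w_def)
qed



lemma rayleigh_min:
  fixes M :: "real^'d^'d"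
  assumes s: "sym_mat M"
  shows "\<exists>u c. u \<noteq> 0 \<and> M *v u = c *\<^sub>R u \<and> (\<forall>y. c * (y \<bullet> y) \<le> y \<bullet> (M *v y))"
proof -
  have ne: "sphere (0::real^'d) 1 \<noteq> {}" by simp
  have co: "continuous_on (sphere (0::real^'d) 1) (\<lambda>y. y \<bullet> (M *v y))"
    by (intro continuous_intros continuous_on_id linear_continuous_on bounded_linear_intros)
  obtain u where u: "u \<in> sphere 0 1" and umin: "\<And>y. y \<in> sphere 0 1 \<Longrightarrow> u \<bullet> (M *v u) \<le> y \<bullet> (M *v y)"
    using continuous_attains_inf[OF compact_sphere ne co] by blast
  define c where "c = u \<bullet> (M *v u)"
  have nu: "norm u = 1" using u by simp
  have ray: "c * (y \<bullet> y) \<le> y \<bullet> (M *v y)" for y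
  proof (cases "y = 0")
    case True thus ?thesis by simp
  next
    case False
    define z where "z = (1 / norm y) *\<^sub>R y"
    have "norm z = 1" using False by (simp add: z_def)
    hence "c \<le> z \<bullet> (M *v z)" using umin[of z] by (simp add: c_def)
    also have "z \<bullet> (M *v z) = (y \<bullet> (M *v y)) / (norm y)^2"
      by (simp add: z_def matrix_vector_mult_scaleR power2_eq_square)
    finally have "c * (norm y)^2 \<le> y \<bullet> (M *v y)" using False by (simp add: field_simps)
    thus ?thesis by (simp add: power2_norm_eq_inner)
  qed
  define P where "P = M - c *\<^sub>R mat 1"
  have Pv: "P *v y = M *v y - c *\<^sub>R y" for y
    by (simp add: P_def matrix_vector_mult_diff_rdistrib scaleR_matrix_vector_assoc[symmetric])
  have sP: "sym_mat P" using s unfolding P_def sym_mat_def by (simp add: transpose_def vec_eq_iff mat_def)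
  have nn: "0 \<le> y \<bullet> (P *v y)" for y using ray[of y] by (simp add: Pv inner_diff_right)
  have z: "u \<bullet> (P *v u) = 0" using nu by (simp add: Pv inner_diff_right c_def power2_norm_eq_inner[symmetric])
  have "P *v u = 0" using psd_kernel[OF sP nn z] .
  hence "M *v u = c *\<^sub>R u" by (simp add: Pv)
  moreover have "u \<noteq> 0" using nu by auto
  ultimately show ?thesis using ray by blast
qed

lemma eig_finite:
  fixes M :: "real^'d^'d"
  assumes s: "sym_mat M"
  shows "finite (eigenvalues M)"
proof -
  define ev where "ev c = (SOME v. v \<noteq> 0 \<and> M *v v = c *\<^sub>R v)" for c
  have evp: "ev c \<noteq> 0 \<and> M *v ev c = c *\<^sub>R ev c" if "c \<in> eigenvalues M" for c
  proof -
    have "\<exists>v. v \<noteq> 0 \<and> M *v v = c *\<^sub>R v" using that by (simp add: eigenvalues_def)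
    thus ?thesis unfolding ev_def by (rule someI_ex)
  qed
  have inj: "inj_on ev (eigenvalues M)"
  proof (rule inj_onI)
    fix c c' assume c: "c \<in> eigenvalues M" and c': "c' \<in> eigenvalues M" and e: "ev c = ev c'"
    have "c *\<^sub>R ev c = M *v ev c" using evp[OF c] by simp
    also have "\<dots> = M *v ev c'" using e by simp
    also have "\<dots> = c' *\<^sub>R ev c'" using evp[OF c'] by simp
    finally have "c *\<^sub>R ev c = c' *\<^sub>R ev c" using e by simp
    moreover have "ev c \<noteq> 0" using evp[OF c] by simp
    ultimately show "c = c'" using scaleR_cancel_right by blast
  qed
  have orth: "pairwise orthogonal (ev ` eigenvalues M)"
    unfolding pairwise_def
  proof (intro ballI impI)
    fix p p' assume "p \<in> ev ` eigenvalues M" "p' \<in> ev ` eigenvalues M" and ne: "p \<noteq> p'"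
    then obtain c c' where c: "c \<in> eigenvalues M" and c': "c' \<in> eigenvalues M"
      and pc: "p = ev c" and pc': "p' = ev c'" by blast
    have cc: "c \<noteq> c'" using ne pc pc' by blast
    have "p \<bullet> (M *v p') = (M *v p) \<bullet> p'" using sym_dot[OF s] .
    moreover have "M *v p' = c' *\<^sub>R p'" "M *v p = c *\<^sub>R p" using evp[OF c] evp[OF c'] pc pc' by auto
    ultimately have "c' * (p \<bullet> p') = c * (p \<bullet> p')" by simp
    hence "p \<bullet> p' = 0" using cc by simp
    thus "orthogonal p p'" by (simp add: orthogonal_def)
  qed
  have "0 \<notin> ev ` eigenvalues M" using evp by auto
  hence "independent (ev ` eigenvalues M)" using pairwise_orthogonal_independent orth by blast
  hence "finite (ev ` eigenvalues M)" using independent_imp_finite by blast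
  thus ?thesis using finite_imageD inj by blast
qed

lemma lambda_min_props:
  fixes M :: "real^'d^'d"
  assumes s: "sym_mat M"
  shows "lambda_min M \<in> eigenvalues M" "\<And>y. lambda_min M * (y \<bullet> y) \<le> y \<bullet> (M *v y)"
proof -
  obtain u c where u: "u \<noteq> 0" "M *v u = c *\<^sub>R u" and ray: "\<And>y. c * (y \<bullet> y) \<le> y \<bullet> (M *v y)"
    using rayleigh_min[OF s] by blast
  have ce: "c \<in> eigenvalues M" using u unfolding eigenvalues_def by blast
  have fin: "finite (eigenvalues M)" using eig_finite[OF s] .
  show "lambda_min M \<in> eigenvalues M" unfolding lambda_min_def using Min_in fin ce by blast
  have le: "lambda_min M \<le> c" unfolding lambda_min_def using Min_le fin ce by blast
  show "lambda_min M * (y \<bullet> y) \<le> y \<bullet> (M *v y)" for y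
  proof -
    have "lambda_min M * (y \<bullet> y) \<le> c * (y \<bullet> y)" using le by (simp add: mult_right_mono)
    thus ?thesis using ray[of y] by linarith
  qed
qed

lemma sym_zero:
  fixes M :: "real^'d^'d"
  assumes s: "sym_mat M" and z: "\<And>x. x \<bullet> (M *v x) = 0"
  shows "M = 0"
proof -
  have "M *v x = 0" for x
  proof -
    have "(x + M *v x) \<bullet> (M *v (x + M *v x)) = x \<bullet> (M *v x) + x \<bullet> (M *v (M *v x)) + (M *v x) \<bullet> (M *v x) + (M *v x) \<bullet> (M *v (M *v x))"
      by (simp add: matrix_vector_right_distrib inner_add_left inner_add_right)
    moreover have "x \<bullet> (M *v (M *v x)) = (M *v x) \<bullet> (M *v x)" using sym_dot[OF s] .
    ultimately have "2 * ((M *v x) \<bullet> (M *v x)) = 0" using z by simp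
    thus ?thesis by simp
  qed
  thus ?thesis by (simp add: matrix_eq)
qed

lemma neg_mv: "(- M) *v x = - (M *v (x::real^'d)) "
  by (simp add: matrix_vector_mult_def vec_eq_iff sum_negf)

lemma psd_sqrt_unique:
  fixes C D :: "real^'d^'d"
  assumes C: "psd C" and D: "psd D" and eq: "C ** C = D ** D"
  shows "C = D"
proof -
  define M where "M = C - D"
  have sC: "sym_mat C" and sD: "sym_mat D" using C D by (auto simp: psd_def)
  have sM: "sym_mat M" using sC sD by (simp add: M_def sym_mat_def transpose_def vec_eq_iff)
  have eig0: "\<mu> = 0" if w: "w \<noteq> 0" "M *v w = \<mu> *\<^sub>R w" for w \<mu>
  proof -
    have Cw: "C *v w = D *v w + \<mu> *\<^sub>R w" using w by (simp add: M_def matrix_vector_mult_diff_rdistrib) (metis add.commute diff_eq_eq)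
    have sq: "(C *v w) \<bullet> (C *v w) = (D *v w) \<bullet> (D *v w)"
    proof -
      have "(C *v w) \<bullet> (C *v w) = w \<bullet> ((C ** C) *v w)" using sym_dot[OF sC] by (simp add: matrix_vector_mul_assoc[symmetric])
      also have "\<dots> = w \<bullet> ((D ** D) *v w)" using eq by simp
      also have "\<dots> = (D *v w) \<bullet> (D *v w)" using sym_dot[OF sD] by (simp add: matrix_vector_mul_assoc[symmetric])
      finally show ?thesis .
    qed
    have e1: "2 * \<mu> * (w \<bullet> (D *v w)) + \<mu>^2 * (w \<bullet> w) = 0"
      using sq unfolding Cw by (simp add: inner_add_left inner_add_right inner_commute power2_eq_square algebra_simps)
    have Dw: "D *v w = C *v w - \<mu> *\<^sub>R w" using Cw by simp
    have e2: "- 2 * \<mu> * (w \<bullet> (C *v w)) + \<mu>^2 * (w \<bullet> w) = 0"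
      using sq unfolding Dw by (simp add: inner_diff_left inner_diff_right inner_commute power2_eq_square algebra_simps) linarith
    show "\<mu> = 0"
    proof (rule ccontr)
      assume m: "\<mu> \<noteq> 0"
      have a: "2 * (w \<bullet> (D *v w)) + \<mu> * (w \<bullet> w) = 0" using e1 m
        by (metis (no_types, opaque_lifting) distrib_left mult.assoc mult.left_commute mult_eq_0_iff power2_eq_square)
      have b: "- 2 * (w \<bullet> (C *v w)) + \<mu> * (w \<bullet> w) = 0" using e2 m
        by (metis (no_types, opaque_lifting) distrib_left mult.assoc mult.left_commute mult_eq_0_iff power2_eq_square)
      have "0 \<le> w \<bullet> (D *v w)" "0 \<le> w \<bullet> (C *v w)" using C D by (auto simp: psd_def)
      with a b have "\<mu> * (w \<bullet> w) = 0" by linarith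
      thus False using m w by simp
    qed
  qed
  obtain u1 c1 where u1: "u1 \<noteq> 0" "M *v u1 = c1 *\<^sub>R u1" and r1: "\<And>y. c1 * (y \<bullet> y) \<le> y \<bullet> (M *v y)"
    using rayleigh_min[OF sM] by blast
  have sM': "sym_mat (-M)" using sM by (simp add: sym_mat_def transpose_def vec_eq_iff)
  obtain u2 c2 where u2: "u2 \<noteq> 0" "(-M) *v u2 = c2 *\<^sub>R u2" and r2: "\<And>y. c2 * (y \<bullet> y) \<le> y \<bullet> ((-M) *v y)"
    using rayleigh_min[OF sM'] by blast
  have "c1 = 0" using eig0 u1 by blast
  moreover have "M *v u2 = (-c2) *\<^sub>R u2" using u2 by (simp add: neg_mv) (metis minus_minus)
  hence "c2 = 0" using eig0 u2 by fastforce
  ultimately have "\<And>y. y \<bullet> (M *v y) = 0" using r1 r2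
    by (metis add.inverse_inverse inner_minus_right neg_mv mult_zero_left neg_0_le_iff_le order_antisym) 
  hence "M = 0" using sym_zero[OF sM] by blast
  thus ?thesis by (simp add: M_def)
qed



lemma inv_props:
  fixes M :: "real^'d^'d"
  assumes "invertible M"
  shows "M ** matrix_inv M = mat 1" "matrix_inv M ** M = mat 1"
proof -
  have "\<exists>A'. M ** A' = mat 1 \<and> A' ** M = mat 1" using assms by (simp add: invertible_def)
  hence "M ** matrix_inv M = mat 1 \<and> matrix_inv M ** M = mat 1"
    unfolding matrix_inv_def by (rule someI_ex)
  thus "M ** matrix_inv M = mat 1" "matrix_inv M ** M = mat 1" by auto
qed

lemma inv_unique:
  fixes B C C' :: "real^'d^'d"
  assumes "B ** C = mat 1" "C' ** B = mat 1"
  shows "C = C'"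
proof -
  have "C = (C' ** B) ** C" using assms(2) by (simp add: matrix_mul_lid)
  also have "\<dots> = C' ** (B ** C)" by (simp add: matrix_mul_assoc)
  also have "\<dots> = C'" using assms(1) by (simp add: matrix_mul_rid)
  finally show ?thesis .
qed

lemma pd_invertible:
  fixes B :: "real^'d^'d"
  assumes "pd B" shows "invertible B"
proof -
  have "\<forall>x. B *v x = 0 \<longrightarrow> x = 0"
  proof (intro allI impI)
    fix x assume "B *v x = 0"
    hence "x \<bullet> (B *v x) = 0" by simp
    thus "x = 0" using assms unfolding pd_def by force
  qed
  hence "\<exists>B'. B' ** B = mat 1" using matrix_left_invertible_ker by blast
  thus ?thesis using invertible_left_inverse by blast
qed

lemma inv_sym:
  fixes B :: "real^'d^'d"
  assumes "sym_mat B" "invertible B"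
  shows "sym_mat (matrix_inv B)"
proof -
  have "transpose (matrix_inv B) ** B = transpose (matrix_inv B) ** transpose B"
    using assms(1) by (simp add: sym_mat_def)
  also have "\<dots> = transpose (B ** matrix_inv B)" by (simp add: matrix_transpose_mul)
  also have "\<dots> = mat 1" using inv_props(1)[OF assms(2)] by simp
  finally have "transpose (matrix_inv B) ** B = mat 1" .
  hence "matrix_inv B = transpose (matrix_inv B)" by (rule inv_unique[OF inv_props(1)[OF assms(2)]])
  thus ?thesis unfolding sym_mat_def by simp
qed

lemma inv_sq:
  fixes B :: "real^'d^'d"
  assumes "invertible B"
  shows "matrix_inv (B ** B) = matrix_inv B ** matrix_inv B"
proof -
  have i2: "invertible (B ** B)" using invertible_mult assms by blast
  have "(matrix_inv B ** matrix_inv B) ** (B ** B) = matrix_inv B ** ((matrix_inv B ** B) ** B)"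
    by (simp add: matrix_mul_assoc)
  also have "\<dots> = mat 1" using inv_props(2)[OF assms] by (simp add: matrix_mul_lid)
  finally have "(matrix_inv B ** matrix_inv B) ** (B ** B) = mat 1" .
  thus ?thesis by (rule inv_unique[OF inv_props(1)[OF i2]])
qed

lemma pd_inv_psd:
  fixes B :: "real^'d^'d"
  assumes "pd B"
  shows "psd (matrix_inv B)"
proof -
  have iB: "invertible B" using pd_invertible assms .
  have sB: "sym_mat B" using assms by (simp add: pd_def)
  have nn: "0 \<le> y \<bullet> (B *v y)" for y
  proof (cases "y = 0")
    case False thus ?thesis using assms unfolding pd_def by (simp add: less_imp_le)
  qed simp
  have "0 \<le> x \<bullet> (matrix_inv B *v x)" for x
  proof -
    have "x = B *v (matrix_inv B *v x)" using inv_props(1)[OF iB] by (simp add: matrix_vector_mul_assoc)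
    hence "x \<bullet> (matrix_inv B *v x) = (B *v (matrix_inv B *v x)) \<bullet> (matrix_inv B *v x)" by simp
    also have "\<dots> = (matrix_inv B *v x) \<bullet> (B *v (matrix_inv B *v x))" by (simp add: inner_commute)
    finally show ?thesis using nn by simp
  qed
  thus ?thesis using inv_sym[OF sB iB] by (simp add: psd_def)
qed

lemma psd_sqrt_eq:
  assumes "psd C" "C ** C = A"
  shows "psd_sqrt A = C"
  unfolding psd_sqrt_def
proof (rule the_equality)
  show "psd C \<and> C ** C = A" using assms by simp
  fix D assume "psd D \<and> D ** D = A"
  thus "D = C" using psd_sqrt_unique assms by metis
qed

lemma mat_inner_outer:
  fixes M :: "real^'d^'d"
  assumes "sym_mat M"
  shows "mat_inner (outer w) M = w \<bullet> (M *v w)"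
proof -
  have "mat_inner (outer w) M = (\<Sum>i\<in>UNIV. \<Sum>k\<in>UNIV. w$i * w$k * M$k$i)"
    by (simp add: mat_inner_def trace_def matrix_matrix_mult_def outer_def)
  also have "\<dots> = (\<Sum>i\<in>UNIV. \<Sum>k\<in>UNIV. w$i * (M$i$k * w$k))"
    using assms unfolding sym_mat_iff by (simp add: mult.commute mult.left_commute)
  also have "\<dots> = w \<bullet> (M *v w)"
    by (simp add: inner_vec_def matrix_vector_mult_def sum_distrib_left)
  finally show ?thesis .
qed



lemma sum_mv: "(sum f I) *v (y::real^'d) = sum (\<lambda>i. f i *v y) I"
  by (induct I rule: infinite_finite_induct) (auto simp: matrix_vector_mult_add_rdistrib)

lemma outer_mv: "outer w *v y = (w \<bullet> y) *\<^sub>R w"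
  by (simp add: outer_def matrix_vector_mult_def vec_eq_iff inner_vec_def sum_distrib_left mult.commute mult.left_commute)

lemma quad_sum:
  "y \<bullet> ((\<Sum>i\<in>I. c i *\<^sub>R outer (v i)) *v y) = (\<Sum>i\<in>I. c i * (v i \<bullet> y)^2)"
  by (simp add: sum_mv scaleR_matrix_vector_assoc[symmetric] outer_mv inner_sum_right power2_eq_square inner_commute mult.assoc)

lemma mat_inner_add: "mat_inner (P + Q) M = mat_inner P M + mat_inner Q M"
  by (simp add: mat_inner_def trace_def matrix_matrix_mult_def sum.distrib algebra_simps)

lemma mat_inner_diff: "mat_inner (P - Q) M = mat_inner P M - mat_inner Q M"
  by (simp add: mat_inner_def trace_def matrix_matrix_mult_def sum_subtractf algebra_simps)

lemma mat_inner_scale: "mat_inner (c *\<^sub>R P) M = c * mat_inner P M"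
  by (simp add: mat_inner_def trace_def matrix_matrix_mult_def sum_distrib_left mult.assoc)

lemma mat_inner_mat: fixes M :: "real^'d^'d" shows "mat_inner (mat l) M = l * trace M"
proof -
  have "(\<Sum>k\<in>UNIV. (mat l :: real^'d^'d)$i$k * M$k$i) = l * M$i$i" for i
  proof -
    have "(\<Sum>k\<in>UNIV. (mat l :: real^'d^'d)$i$k * M$k$i) = (\<Sum>k\<in>UNIV. if k = i then l * M$i$i else 0)"
      by (rule sum.cong) (auto simp: mat_def)
    thus ?thesis by simp
  qed
  thus ?thesis by (simp add: mat_inner_def trace_def matrix_matrix_mult_def sum_distrib_left)
qed

lemma mat_inner_zero: "mat_inner 0 M = 0"
  by (simp add: mat_inner_def trace_def matrix_matrix_mult_def)

lemma mat_inner_sum: "mat_inner (sum P I) M = sum (\<lambda>i. mat_inner (P i) M) I"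
  by (induct I rule: infinite_finite_induct) (auto simp: mat_inner_add mat_inner_zero)

lemma frob:
  fixes M :: "real^'d^'d"
  assumes "sym_mat M"
  shows "trace (M ** M) = (\<Sum>i\<in>UNIV. \<Sum>k\<in>UNIV. (M$i$k)^2)"
  using assms unfolding sym_mat_iff
  by (simp add: trace_def matrix_matrix_mult_def power2_eq_square)

lemma row_cs:
  fixes M :: "real^'d^'d"
  shows "(M *v w) \<bullet> (M *v w) \<le> (\<Sum>i\<in>UNIV. \<Sum>k\<in>UNIV. (M$i$k)^2) * (w \<bullet> w)"
proof -
  have "(M *v w) \<bullet> (M *v w) = (\<Sum>i\<in>UNIV. (\<Sum>k\<in>UNIV. M$i$k * w$k)^2)"
    by (simp add: inner_vec_def matrix_vector_mult_def power2_eq_square)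
  also have "\<dots> \<le> (\<Sum>i\<in>UNIV. (\<Sum>k\<in>UNIV. (M$i$k)^2) * (\<Sum>k\<in>UNIV. (w$k)^2))"
    by (intro sum_mono Cauchy_Schwarz_ineq_sum)
  also have "\<dots> = (\<Sum>i\<in>UNIV. \<Sum>k\<in>UNIV. (M$i$k)^2) * (w \<bullet> w)"
    by (simp add: sum_distrib_right inner_vec_def power2_eq_square)
  finally show ?thesis .
qed

lemma trace_le:
  fixes M :: "real^'d^'d"
  shows "trace M \<le> sqrt (real CARD('d)) * sqrt (\<Sum>i\<in>UNIV. \<Sum>k\<in>UNIV. (M$i$k)^2)"
proof -
  have "(trace M)^2 = (\<Sum>i\<in>UNIV. 1 * M$i$i)^2" by (simp add: trace_def)
  also have "\<dots> \<le> (\<Sum>i\<in>(UNIV::'d set). 1^2) * (\<Sum>i\<in>UNIV. (M$i$i)^2)"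
    by (rule Cauchy_Schwarz_ineq_sum)
  also have "\<dots> \<le> real CARD('d) * (\<Sum>i\<in>UNIV. \<Sum>k\<in>UNIV. (M$i$k)^2)"
  proof -
    have "(M$i$i)^2 \<le> (\<Sum>k\<in>UNIV. (M$i$k)^2)" for i
      by (rule member_le_sum) auto
    hence "(\<Sum>i\<in>UNIV. (M$i$i)^2) \<le> (\<Sum>i\<in>UNIV. \<Sum>k\<in>UNIV. (M$i$k)^2)" by (rule sum_mono)
    thus ?thesis by (simp add: mult_left_mono)
  qed
  finally have "(trace M)^2 \<le> real CARD('d) * (\<Sum>i\<in>UNIV. \<Sum>k\<in>UNIV. (M$i$k)^2)" .
  hence "\<bar>trace M\<bar> \<le> sqrt (real CARD('d) * (\<Sum>i\<in>UNIV. \<Sum>k\<in>UNIV. (M$i$k)^2))"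
    using real_le_rsqrt by (metis real_sqrt_abs real_sqrt_le_mono)
  thus ?thesis by (simp add: real_sqrt_mult)
qed

lemma psd_diag:
  fixes M :: "real^'d^'d"
  assumes "psd M" shows "0 \<le> M$k$k"
proof -
  have "0 \<le> axis k 1 \<bullet> (M *v axis k 1)" using assms by (simp add: psd_def)
  thus ?thesis by (simp add: inner_axis' matrix_vector_mul_component inner_axis)
qed

lemma psd_trace_nn:
  fixes M :: "real^'d^'d"
  assumes "psd M" shows "0 \<le> trace M"
  unfolding trace_def using psd_diag[OF assms] by (simp add: sum_nonneg)

lemma N_ge:
  fixes X Binv :: "real^'d^'d"
  assumes X: "X = (\<Sum>i\<in>I. c i *\<^sub>R outer (v i))"
    and ray: "\<And>y. lam * (y \<bullet> y) \<le> y \<bullet> (X *v y)"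
  shows "lam * (\<Sum>i\<in>UNIV. \<Sum>k\<in>UNIV. (Binv$i$k)^2) \<le> (\<Sum>i\<in>I. c i * ((Binv *v v i) \<bullet> (Binv *v v i)))"
proof -
  have "(\<Sum>i\<in>I. c i * ((Binv *v v i) \<bullet> (Binv *v v i))) = (\<Sum>i\<in>I. \<Sum>k\<in>UNIV. c i * (v i \<bullet> Binv$k)^2)"
    by (simp add: inner_vec_def[of "Binv *v v _"] matrix_vector_mul_component sum_distrib_left power2_eq_square inner_commute)
  also have "\<dots> = (\<Sum>k\<in>UNIV. \<Sum>i\<in>I. c i * (v i \<bullet> Binv$k)^2)" by (rule sum.swap)
  also have "\<dots> = (\<Sum>k\<in>UNIV. Binv$k \<bullet> (X *v Binv$k))" by (simp add: X quad_sum)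
  finally have e: "(\<Sum>i\<in>I. c i * ((Binv *v v i) \<bullet> (Binv *v v i))) = (\<Sum>k\<in>UNIV. Binv$k \<bullet> (X *v Binv$k))" .
  have "lam * (\<Sum>i\<in>UNIV. \<Sum>k\<in>UNIV. (Binv$i$k)^2) = (\<Sum>k\<in>UNIV. lam * (Binv$k \<bullet> Binv$k))"
    by (simp add: sum_distrib_left inner_vec_def power2_eq_square)
  also have "\<dots> \<le> (\<Sum>k\<in>UNIV. Binv$k \<bullet> (X *v Binv$k))" by (intro sum_mono ray)
  finally show ?thesis using e by simp
qed



lemma core:
  fixes a r x :: "nat \<Rightarrow> real" and S Ou :: "nat set" and al lam eps q E T :: real and b :: nat
  assumes fS: "finite S" and fO: "finite Ou" and cS: "card S = b"
    and a_nn: "\<And>i. 0 \<le> a i" and r_nn: "\<And>i. 0 \<le> r i"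
    and xS: "\<And>i. i \<in> S \<Longrightarrow> 0 \<le> x i \<and> x i \<le> 1"
    and xO: "\<And>i. i \<in> Ou \<Longrightarrow> 0 \<le> x i"
    and al: "0 < al" and lam: "0 < lam" and eps: "0 < eps"
    and hsa: "(\<Sum>i\<in>S. a i) \<le> lam * (1 - eps) - 1 / al"
    and hN: "lam \<le> (\<Sum>i\<in>S. x i * a i) + (\<Sum>i\<in>Ou. x i * a i)"
    and hq: "(\<Sum>i\<in>S. x i) + (\<Sum>i\<in>Ou. x i) = q"
    and T: "0 \<le> T"
    and hRO: "(\<Sum>i\<in>Ou. x i * r i) \<le> sqrt T * sqrt (\<Sum>i\<in>Ou. x i * a i)"
    and hE: "2 * al * sqrt T * sqrt lam = E"
    and hD: "q + E < real b - 2 * al * (\<Sum>i\<in>S. r i)"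
  shows "\<exists>i\<in>{i\<in>S. 2 * al * r i < 1}. \<exists>j\<in>Ou.
           a j / (1 + 2 * al * r j) - a i / (1 - 2 * al * r i) \<ge> eps / real b * lam"
proof (rule ccontr)
  define S' where "S' = {i\<in>S. 2 * al * r i < 1}"
  define g where "g i = a i / (1 - 2 * al * r i)" for i
  define f where "f j = a j / (1 + 2 * al * r j)" for j
  define RS where "RS = (\<Sum>i\<in>S. r i)"
  define D where "D = real b - 2 * al * RS"
  define \<delta> where "\<delta> = eps / real b * lam"
  define sa where "sa = (\<Sum>i\<in>S. a i)"
  define qS where "qS = (\<Sum>i\<in>S. x i)"
  define qO where "qO = (\<Sum>i\<in>Ou. x i)"
  define NS where "NS = (\<Sum>i\<in>S. x i * a i)"
  define NO where "NO = (\<Sum>i\<in>Ou. x i * a i)"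
  define RO where "RO = (\<Sum>i\<in>Ou. x i * r i)"
  assume H0: "\<not> ?thesis"
  have H: "f j - g i < \<delta>" if "i \<in> S'" "j \<in> Ou" for i j
    using H0 that unfolding S'_def f_def g_def \<delta>_def by force
  have qS0: "0 \<le> qS" unfolding qS_def using xS by (simp add: sum_nonneg)
  have qO0: "0 \<le> qO" unfolding qO_def using xO by (simp add: sum_nonneg)
  have RS0: "0 \<le> RS" unfolding RS_def using r_nn by (simp add: sum_nonneg)
  have RO0: "0 \<le> RO" unfolding RO_def using r_nn xO by (simp add: sum_nonneg)
  have NO0: "0 \<le> NO" unfolding NO_def using a_nn xO by (simp add: sum_nonneg)
  have sqT: "0 \<le> sqrt T" using T by simp
  have E0: "0 \<le> E" using hE al lam T by auto
  have q0: "0 \<le> q" using hq qS0 qO0 qS_def qO_def by linarith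
  have Dpos: "q + E < D" using hD by (simp add: D_def RS_def)
  have D0: "0 < D" using Dpos q0 E0 by linarith
  have Db: "D \<le> real b" using RS0 al by (simp add: D_def)
  have b0: "0 < real b" using D0 Db by linarith
  have d0: "0 \<le> \<delta>" using eps lam b0 by (simp add: \<delta>_def)
  have db: "\<delta> * real b = eps * lam" using b0 by (simp add: \<delta>_def)
  have fS': "finite S'" using fS by (simp add: S'_def)
  have neS': "S' \<noteq> {}"
  proof
    assume "S' = {}"
    hence "\<forall>i\<in>S. 1 \<le> 2 * al * r i" unfolding S'_def by force
    hence "(\<Sum>i\<in>S. (1::real)) \<le> (\<Sum>i\<in>S. 2 * al * r i)" by (intro sum_mono) auto
    hence "real b \<le> 2 * al * RS" using cS by (simp add: RS_def sum_distrib_left)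
    thus False using D0 by (simp add: D_def)
  qed
  define \<gamma> where "\<gamma> = Min (g ` S')"
  have \<gamma>in: "\<gamma> \<in> g ` S'" unfolding \<gamma>_def using fS' neS' by simp
  have \<gamma>le: "\<gamma> \<le> g i" if "i \<in> S'" for i unfolding \<gamma>_def using fS' that by simp
  obtain i0 where i0: "i0 \<in> S'" "g i0 = \<gamma>" using \<gamma>in by auto
  have g0: "0 \<le> g i" if "i \<in> S'" for i
    using that a_nn unfolding S'_def g_def by simp
  have \<gamma>0: "0 \<le> \<gamma>" using g0 i0 by auto
  have h1: "\<gamma> * (1 - 2 * al * r i) \<le> a i" if "i \<in> S" for i
  proof (cases "i \<in> S'")
    case True
    hence den: "0 < 1 - 2 * al * r i" by (simp add: S'_def)
    have "\<gamma> \<le> a i / (1 - 2 * al * r i)" using \<gamma>le[OF True] by (simp add: g_def)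
    thus ?thesis using den by (simp add: pos_le_divide_eq)
  next
    case False
    hence "1 - 2 * al * r i \<le> 0" using that by (simp add: S'_def)
    hence "\<gamma> * (1 - 2 * al * r i) \<le> 0" using \<gamma>0 by (simp add: mult_nonneg_nonpos)
    thus ?thesis using a_nn[of i] by linarith
  qed
  have h2: "x j * a j \<le> (\<gamma> + \<delta>) * x j + 2 * al * (\<gamma> + \<delta>) * (x j * r j)" if "j \<in> Ou" for j
  proof -
    have den: "0 < 1 + 2 * al * r j" using al r_nn[of j] by (simp add: add_pos_nonneg)
    have "f j < \<gamma> + \<delta>" using H[OF i0(1) that] i0(2) by simp
    hence "a j < (\<gamma> + \<delta>) * (1 + 2 * al * r j)" using den by (simp add: f_def pos_divide_less_eq)
    hence "x j * a j \<le> x j * ((\<gamma> + \<delta>) * (1 + 2 * al * r j))"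
      using xO[OF that] by (simp add: mult_left_mono)
    thus ?thesis by (simp add: algebra_simps)
  qed
  have NOle: "NO \<le> (\<gamma> + \<delta>) * qO + (\<gamma> + \<delta>) * (2 * al * RO)"
  proof -
    have "NO \<le> (\<Sum>j\<in>Ou. (\<gamma> + \<delta>) * x j + 2 * al * (\<gamma> + \<delta>) * (x j * r j))"
      unfolding NO_def by (intro sum_mono h2)
    also have "\<dots> = (\<gamma> + \<delta>) * qO + (\<gamma> + \<delta>) * (2 * al * RO)"
      by (simp add: qO_def RO_def sum.distrib sum_distrib_left algebra_simps)
    finally show ?thesis .
  qed
  have saD: "\<gamma> * D \<le> sa"
  proof -
    have "(\<Sum>i\<in>S. \<gamma> * (1 - 2 * al * r i)) \<le> sa" unfolding sa_def by (intro sum_mono h1)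
    moreover have "(\<Sum>i\<in>S. \<gamma> * (1 - 2 * al * r i)) = \<gamma> * D"
    proof -
      have "(\<Sum>i\<in>S. \<gamma> * (1 - 2 * al * r i)) = (\<Sum>i\<in>S. \<gamma> - (\<gamma> * 2 * al) * r i)"
        by (simp add: algebra_simps)
      also have "\<dots> = \<gamma> * real b - (\<gamma> * 2 * al) * RS"
        using cS by (simp add: sum_subtractf sum_distrib_left RS_def)
      also have "\<dots> = \<gamma> * D" by (simp add: D_def algebra_simps)
      finally show ?thesis .
    qed
    ultimately show ?thesis by simp
  qed
  have h3: "x i * a i \<le> a i - \<gamma> * (1 - x i) + 2 * al * \<gamma> * r i" if "i \<in> S" for i
  proof -
    have x01: "0 \<le> 1 - x i" "1 - x i \<le> 1" using xS[OF that] by auto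
    have "(1 - x i) * (\<gamma> * (1 - 2 * al * r i)) \<le> (1 - x i) * a i"
      using h1[OF that] x01 by (simp add: mult_left_mono)
    moreover have "(1 - x i) * (2 * al * \<gamma> * r i) \<le> 2 * al * \<gamma> * r i"
    proof -
      have "0 \<le> 2 * al * \<gamma> * r i" using al \<gamma>0 r_nn[of i] by simp
      thus ?thesis using x01 by (simp add: mult_left_le_one_le)
    qed
    ultimately show ?thesis by (simp add: algebra_simps)
  qed
  have NSle: "NS \<le> sa - \<gamma> * (real b - qS) + \<gamma> * (2 * al * RS)"
  proof -
    have "NS \<le> (\<Sum>i\<in>S. a i - \<gamma> * (1 - x i) + 2 * al * \<gamma> * r i)"
      unfolding NS_def by (intro sum_mono h3)
    also have "\<dots> = (\<Sum>i\<in>S. a i) - (\<Sum>i\<in>S. \<gamma> * (1 - x i)) + (\<Sum>i\<in>S. (2 * al * \<gamma>) * r i)"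
      by (simp add: sum.distrib sum_subtractf)
    also have "(\<Sum>i\<in>S. \<gamma> * (1 - x i)) = \<gamma> * (real b - qS)"
      using cS by (simp add: qS_def sum_subtractf sum_distrib_left[symmetric])
    also have "(\<Sum>i\<in>S. (2 * al * \<gamma>) * r i) = (2 * al * \<gamma>) * RS"
      by (simp add: RS_def sum_distrib_left)
    finally show ?thesis by (simp add: sa_def algebra_simps)
  qed
  have lamN: "lam \<le> NS + NO" using hN by (simp add: NS_def NO_def)
  have qq: "qS + qO = q" using hq by (simp add: qS_def qO_def)
  have sa_le: "sa \<le> lam * (1 - eps) - 1 / al" using hsa by (simp add: sa_def)
  have ial: "0 < 1 / al" using al by simp
  define c where "c = 2 * al * sqrt T"
  have c0: "0 \<le> c" using al sqT by (simp add: c_def)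
  have KO: "2 * al * RO \<le> c * sqrt NO"
    using hRO al by (simp add: RO_def NO_def c_def)
  have Ec: "E = c * sqrt lam" using hE by (simp add: c_def)
  show False
  proof (cases "2 * al * RO \<le> E")
    case True
    have t1: "\<gamma> * (qO + 2 * al * RO - real b + qS + 2 * al * RS) \<le> 0"
    proof -
      have "qO + 2 * al * RO - real b + qS + 2 * al * RS \<le> 0"
        using True Dpos qq qS0 by (simp add: D_def)
      thus ?thesis using \<gamma>0 by (simp add: mult_nonneg_nonpos)
    qed
    have t2: "\<delta> * (qO + 2 * al * RO) \<le> \<delta> * real b"
    proof -
      have "qO + 2 * al * RO \<le> real b" using True Dpos qq qS0 Db by linarith
      thus ?thesis using d0 by (simp add: mult_left_mono)
    qed
    have "lam \<le> sa - \<gamma> * (real b - qS) + \<gamma> * (2 * al * RS) + ((\<gamma> + \<delta>) * qO + (\<gamma> + \<delta>) * (2 * al * RO))"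
      using lamN NSle NOle by linarith
    also have "\<dots> = sa + \<gamma> * (qO + 2 * al * RO - real b + qS + 2 * al * RS) + \<delta> * (qO + 2 * al * RO)"
      by (simp add: algebra_simps)
    also have "\<dots> \<le> sa + \<delta> * real b" using t1 t2 by linarith
    also have "\<dots> \<le> lam * (1 - eps) - 1 / al + eps * lam" using sa_le db by linarith
    finally show False using ial by (simp add: algebra_simps)
  next
    case False
    define y where "y = sqrt NO"
    define m where "m = sqrt lam"
    have m0: "0 < m" using lam by (simp add: m_def)
    have yNO: "y * y = NO" using NO0 by (simp add: y_def)
    have mlam: "m * m = lam" using lam by (simp add: m_def)
    have "c * m < c * y" using False KO Ec by (simp add: y_def m_def)
    hence ym: "m < y" using c0 by (metis mult_left_mono not_le)
    have gd: "(\<gamma> + \<delta>) * D \<le> lam"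
    proof -
      have dD: "\<delta> * D \<le> \<delta> * real b" using Db d0 by (simp add: mult_left_mono)
      have e: "(\<gamma> + \<delta>) * D = \<gamma> * D + \<delta> * D" by (simp add: algebra_simps)
      have e2: "lam * (1 - eps) = lam - eps * lam" by (simp add: algebra_simps)
      show ?thesis using e e2 dD saD sa_le db ial by linarith
    qed
    have gd0: "0 \<le> \<gamma> + \<delta>" using \<gamma>0 d0 by simp
    have "NO \<le> (\<gamma> + \<delta>) * (qO + 2 * al * RO)" using NOle by (simp add: algebra_simps)
    also have "\<dots> \<le> (\<gamma> + \<delta>) * (q + c * y)"
    proof -
      have "qO + 2 * al * RO \<le> q + c * y" using KO qq qS0 by (simp add: y_def)
      thus ?thesis using gd0 by (simp add: mult_left_mono)
    qed
    finally have n1: "NO * D \<le> (\<gamma> + \<delta>) * D * (q + c * y)" using D0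
      by (metis mult.commute mult.left_commute mult_right_mono less_imp_le)
    have qcy: "0 \<le> q + c * y" using q0 c0 ym m0 by simp
    have n2: "(\<gamma> + \<delta>) * D * (q + c * y) \<le> lam * (q + c * y)"
      using gd qcy by (simp add: mult_right_mono)
    have n3: "y * y * (q + c * m) < y * y * D"
    proof -
      have "0 < y * y" using ym m0 by simp
      moreover have "q + c * m < D" using Dpos Ec by (simp add: m_def)
      ultimately show ?thesis by (rule mult_strict_left_mono[rotated])
    qed
    have n4: "m * m * q \<le> y * y * q" using ym m0 q0 by (simp add: mult_mono mult_right_mono)
    have n5: "m * m * (c * y) \<le> y * y * (c * m)"
    proof -
      have "m * m * (c * y) = (c * m * y) * m" by (simp add: algebra_simps)
      also have "\<dots> \<le> (c * m * y) * y" using ym m0 c0 by (intro mult_left_mono) auto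
      also have "\<dots> = y * y * (c * m)" by (simp add: algebra_simps)
      finally show ?thesis .
    qed
    have "y * y * D \<le> lam * (q + c * y)" using n1 n2 yNO by simp
    also have "\<dots> = m * m * q + m * m * (c * y)" using mlam by (simp add: algebra_simps)
    also have "\<dots> \<le> y * y * q + y * y * (c * m)" using n4 n5 by linarith
    also have "\<dots> = y * y * (q + c * m)" by (simp add: algebra_simps)
    finally show False using n3 by linarith
  qed
qed



lemma mat_scale1: "mat l = l *\<^sub>R (mat 1 :: real^'d^'d)"
  by (simp add: vec_eq_iff mat_def)

lemma mat_mv: "mat l *v (w::real^'d) = l *\<^sub>R w"
  by (metis mat_scale1 matrix_vector_mul_lid scaleR_matrix_vector_assoc)

lemma sym_outer_sum: "sym_mat (\<Sum>i\<in>I. c i *\<^sub>R outer (v i) :: real^'d^'d)"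
  unfolding sym_mat_iff by (simp add: outer_def mult.commute)

lemma sym_mat1: "sym_mat (mat 1 :: real^'d^'d)"
  by (simp add: sym_mat_def)

lemma trace_outer_sum:
  "trace (\<Sum>i\<in>I. c i *\<^sub>R outer (v i) :: real^'d^'d) = (\<Sum>i\<in>I. c i * (v i \<bullet> v i))"
proof -
  have "trace M = mat_inner M (mat 1)" for M :: "real^'d^'d"
    by (simp add: mat_inner_def)
  thus ?thesis
    by (simp add: mat_inner_sum mat_inner_scale mat_inner_outer[OF sym_mat1])
qed



lemma wcs:
  fixes w p q :: "nat \<Rightarrow> real"
  assumes "\<And>i. i \<in> I \<Longrightarrow> 0 \<le> w i"
  shows "(\<Sum>i\<in>I. w i * (p i * q i)) \<le> sqrt (\<Sum>i\<in>I. w i * (p i)^2) * sqrt (\<Sum>i\<in>I. w i * (q i)^2)"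
proof -
  have e1: "(\<Sum>i\<in>I. w i * (p i * q i)) = (\<Sum>i\<in>I. (sqrt (w i) * p i) * (sqrt (w i) * q i))"
    using assms by (intro sum.cong) (auto simp: algebra_simps real_sqrt_mult_self)
  have e2: "(\<Sum>i\<in>I. w i * (p i)^2) = (\<Sum>i\<in>I. (sqrt (w i) * p i)^2)"
    using assms by (intro sum.cong) (auto simp: power_mult_distrib)
  have e3: "(\<Sum>i\<in>I. w i * (q i)^2) = (\<Sum>i\<in>I. (sqrt (w i) * q i)^2)"
    using assms by (intro sum.cong) (auto simp: power_mult_distrib)
  have "(\<Sum>i\<in>I. (sqrt (w i) * p i) * (sqrt (w i) * q i))^2 \<le> (\<Sum>i\<in>I. (sqrt (w i) * p i)^2) * (\<Sum>i\<in>I. (sqrt (w i) * q i)^2)"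
    by (rule Cauchy_Schwarz_ineq_sum)
  hence "(\<Sum>i\<in>I. (sqrt (w i) * p i) * (sqrt (w i) * q i)) \<le> sqrt ((\<Sum>i\<in>I. (sqrt (w i) * p i)^2) * (\<Sum>i\<in>I. (sqrt (w i) * q i)^2))"
    using real_le_rsqrt by blast
  thus ?thesis using e1 e2 e3 by (simp add: real_sqrt_mult)
qed

theorem proposition3p12:
  fixes v :: "nat \<Rightarrow> real^'d"
    and n b :: nat
    and x :: "nat \<Rightarrow> real"
    and q \<epsilon> \<alpha> l :: real
    and X Z A :: "real^'d^'d"
    and S S' :: "nat set"
    and \<Phi> :: "nat \<Rightarrow> nat \<Rightarrow> real"
  assumes x_range: "\<forall>i\<in>{..<n}. 0 \<le> x i \<and> x i \<le> 1"
    and x_sum: "(\<Sum>i<n. x i) = q"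
    and X_def: "X = (\<Sum>i<n. x i *\<^sub>R outer (v i))"
    and X_pos: "lambda_min X > 0"
    and S_sub: "S \<subseteq> {..<n}"
    and S_card: "card S = b"
    and Z_def: "Z = (\<Sum>i\<in>S. outer (v i))"
    and eps: "0 < \<epsilon>" "\<epsilon> < 1/2"
    and alpha_def: "\<alpha> = sqrt (real CARD('d)) / (\<epsilon> * lambda_min X)"
    and ell_pd: "pd (\<alpha> *\<^sub>R Z - mat l)"
    and A_def: "A = matrix_inv ((\<alpha> *\<^sub>R Z - mat l) ** (\<alpha> *\<^sub>R Z - mat l))"
    and ell_tr: "trace A = 1"
    and S'_def: "S' = {i\<in>S. 2 * \<alpha> * mat_inner (outer (v i)) (psd_sqrt A) < 1}"
    and Phi_def: "\<And>i j. \<Phi> i j =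
        mat_inner (outer (v j)) A / (1 + 2 * \<alpha> * mat_inner (outer (v j)) (psd_sqrt A))
      - mat_inner (outer (v i)) A / (1 - 2 * \<alpha> * mat_inner (outer (v i)) (psd_sqrt A))"
    and Z_small: "lambda_min Z \<le> (1 - 2 * \<epsilon>) * lambda_min X"
    and b_large: "real b \<ge> q + 2 * (real CARD('d) + real CARD('d) / \<epsilon>)
        + 2 * real CARD('d) / \<epsilon> * sqrt (lambda_avg X / lambda_min X)"
  shows "\<exists>i\<in>S'. \<exists>j\<in>{..<n} - S. \<Phi> i j \<ge> \<epsilon> / real b * lambda_min X"
proof -
  define d where "d = real CARD('d)"
  define lam where "lam = lambda_min X"
  define B where "B = \<alpha> *\<^sub>R Z - mat l"
  define Bi where "Bi = matrix_inv B"
  have d1: "1 \<le> d" by (simp add: d_def)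
  have pdB: "pd B" using ell_pd by (simp add: B_def)
  have sB: "sym_mat B" using pdB by (simp add: pd_def)
  have iB: "invertible B" using pd_invertible[OF pdB] .
  have BBi: "B ** Bi = mat 1" using inv_props(1)[OF iB] by (simp add: Bi_def)
  have sBi: "sym_mat Bi" using inv_sym[OF sB iB] by (simp add: Bi_def)
  have psdBi: "psd Bi" using pd_inv_psd[OF pdB] by (simp add: Bi_def)
  have Aeq: "A = Bi ** Bi" using A_def inv_sq[OF iB] by (simp add: B_def Bi_def)
  have sqA: "psd_sqrt A = Bi" using psd_sqrt_eq[OF psdBi] Aeq by simp
  have sA: "sym_mat A" using sBi unfolding Aeq sym_mat_def by (simp add: matrix_transpose_mul)
  define a where "a i = (Bi *v v i) \<bullet> (Bi *v v i)" for i
  define r where "r i = v i \<bullet> (Bi *v v i)" for i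
  have ha: "mat_inner (outer (v i)) A = a i" for i
  proof -
    have "mat_inner (outer (v i)) A = v i \<bullet> (A *v v i)" by (rule mat_inner_outer[OF sA])
    also have "\<dots> = v i \<bullet> (Bi *v (Bi *v v i))" by (simp add: Aeq matrix_vector_mul_assoc)
    also have "\<dots> = a i" using sym_dot[OF sBi] by (simp add: a_def)
    finally show ?thesis .
  qed
  have hr: "mat_inner (outer (v i)) (psd_sqrt A) = r i" for i
    by (simp add: sqA mat_inner_outer[OF sBi] r_def)
  have a_nn: "0 \<le> a i" for i by (simp add: a_def)
  have r_nn: "0 \<le> r i" for i using psdBi by (simp add: psd_def r_def)
  define F where "F = (\<Sum>i\<in>UNIV. \<Sum>k\<in>UNIV. (Bi$i$k)^2)"
  have F1: "F = 1" using ell_tr frob[OF sBi] by (simp add: Aeq F_def)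
  define t where "t = trace Bi"
  have t_le: "t \<le> sqrt d" using trace_le[of Bi] F1 by (simp add: t_def F_def d_def)
  have t0: "0 \<le> t" using psd_trace_nn[OF psdBi] by (simp add: t_def)
  have sX: "sym_mat X" using sym_outer_sum by (simp add: X_def)
  have sZ: "sym_mat Z" unfolding sym_mat_iff Z_def by (simp add: outer_def mult.commute)
  have rayX: "\<And>y. lam * (y \<bullet> y) \<le> y \<bullet> (X *v y)" using lambda_min_props(2)[OF sX] by (simp add: lam_def)
  have lam0: "0 < lam" using X_pos by (simp add: lam_def)
  have Nge: "lam * F \<le> (\<Sum>i\<in>{..<n}. x i * a i)"
    using N_ge[OF X_def rayX] by (simp add: F_def a_def)
  hence Nge': "lam \<le> (\<Sum>i\<in>{..<n}. x i * a i)" using F1 by simp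
  have al0: "0 < \<alpha>" using alpha_def eps lam0 by (simp add: lam_def)
  have alam: "\<alpha> * lam * \<epsilon> = sqrt d" using alpha_def eps lam0 by (simp add: lam_def d_def)
  define \<mu> where "\<mu> = lambda_min Z"
  obtain w where w: "w \<noteq> 0" "Z *v w = \<mu> *\<^sub>R w"
    using lambda_min_props(1)[OF sZ] by (auto simp: eigenvalues_def \<mu>_def)
  define c where "c = \<alpha> * \<mu> - l"
  have Bw: "B *v w = c *\<^sub>R w"
    using w by (simp add: B_def c_def matrix_vector_mult_diff_rdistrib scaleR_matrix_vector_assoc[symmetric] mat_mv algebra_simps)
  have ww: "0 < w \<bullet> w" using w by simp
  have cpos: "0 < c"
  proof -
    have "0 < w \<bullet> (B *v w)" using pdB w by (simp add: pd_def)
    hence "0 < c * (w \<bullet> w)" using Bw by simp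
    thus ?thesis using ww by (simp add: zero_less_mult_iff)
  qed
  have Biw: "Bi *v w = (1 / c) *\<^sub>R w"
  proof -
    have "w = Bi *v (B *v w)"
      using BBi iB inv_props(2)[OF iB] by (simp add: Bi_def matrix_vector_mul_assoc)
    hence "w = c *\<^sub>R (Bi *v w)" using Bw by (simp add: matrix_vector_mult_scaleR)
    thus ?thesis using cpos by (metis divide_inverse_commute divide_self_if less_irrefl mult.right_neutral scaleR_one scaleR_scaleR)
  qed
  have "(Bi *v w) \<bullet> (Bi *v w) \<le> F * (w \<bullet> w)" using row_cs[of Bi w] by (simp add: F_def)
  hence "(1 / c)^2 * (w \<bullet> w) \<le> w \<bullet> w" using F1 Biw by (simp add: power2_eq_square)
  hence "(1 / c)^2 \<le> 1" using ww by simp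
  hence c2: "1 \<le> c^2" using cpos by (simp add: power_le_one_iff field_simps)
  have c1: "1 \<le> c"
  proof (rule ccontr)
    assume "\<not> 1 \<le> c"
    hence "c * c < 1 * 1" using cpos by (intro mult_strict_mono) auto
    thus False using c2 by (simp add: power2_eq_square)
  qed
  have hl: "l \<le> \<alpha> * ((1 - 2 * \<epsilon>) * lam) - 1"
  proof -
    have "\<alpha> * \<mu> \<le> \<alpha> * ((1 - 2 * \<epsilon>) * lam)" using Z_small al0 by (simp add: \<mu>_def lam_def)
    thus ?thesis using c1 by (simp add: c_def)
  qed
  have aZ: "\<alpha> *\<^sub>R Z = B + mat l" by (simp add: B_def)
  have sumr: "(\<Sum>i\<in>S. r i) = mat_inner Z Bi"
    by (simp add: Z_def mat_inner_sum mat_inner_outer[OF sBi] r_def)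
  have suma: "(\<Sum>i\<in>S. a i) = mat_inner Z A"
    by (simp add: Z_def mat_inner_sum ha)
  have RS: "\<alpha> * (\<Sum>i\<in>S. r i) = d + l * t"
  proof -
    have "\<alpha> * mat_inner Z Bi = mat_inner (B + mat l) Bi" by (simp add: mat_inner_scale[symmetric] aZ)
    also have "\<dots> = mat_inner B Bi + l * t" by (simp add: mat_inner_add mat_inner_mat t_def)
    also have "mat_inner B Bi = d" by (simp add: mat_inner_def BBi trace_I d_def)
    finally show ?thesis by (simp add: sumr)
  qed
  have SA: "\<alpha> * (\<Sum>i\<in>S. a i) = t + l"
  proof -
    have "\<alpha> * mat_inner Z A = mat_inner (B + mat l) A" by (simp add: mat_inner_scale[symmetric] aZ)
    also have "\<dots> = mat_inner B A + l" by (simp add: mat_inner_add mat_inner_mat ell_tr)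
    also have "mat_inner B A = t" by (simp add: mat_inner_def Aeq matrix_mul_assoc BBi t_def)
    finally show ?thesis by (simp add: suma)
  qed
  define T where "T = trace X"
  have Tsum: "T = (\<Sum>i<n. x i * (v i \<bullet> v i))" by (simp add: T_def X_def trace_outer_sum)
  have T0: "0 \<le> T" unfolding Tsum using x_range by (intro sum_nonneg) simp
  have avg: "lambda_avg X = T / d" by (simp add: lambda_avg_def T_def d_def)
  define Ou where "Ou = {..<n} - S"
  have fS: "finite S" using S_sub finite_subset by blast
  have fO: "finite Ou" by (simp add: Ou_def)
  have split: "(\<Sum>i<n. h i) = (\<Sum>i\<in>S. h i) + (\<Sum>i\<in>Ou. h i)" for h :: "nat \<Rightarrow> real"
    using sum.subset_diff[OF S_sub] by (simp add: Ou_def add.commute)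
  define E where "E = 2 * d / \<epsilon> * sqrt (lambda_avg X / lam)"
  have hE: "2 * \<alpha> * sqrt T * sqrt lam = E"
  proof -
    have sd: "sqrt d * sqrt d = d" using d1 by simp
    have sl: "sqrt lam * sqrt lam = lam" using lam0 by simp
    have sdp: "0 < sqrt d" using d1 by simp
    have slp: "0 < sqrt lam" using lam0 by simp
    have "E = 2 * d / \<epsilon> * (sqrt T / (sqrt d * sqrt lam))"
      by (simp add: E_def avg real_sqrt_divide real_sqrt_mult)
    also have "\<dots> = 2 * sqrt d * sqrt T / (\<epsilon> * sqrt lam)"
      using sdp slp eps sd by (simp add: field_simps)
    also have "\<dots> = 2 * \<alpha> * sqrt T * sqrt lam"
      using alpha_def sdp slp eps sl by (simp add: lam_def[symmetric] d_def[symmetric] field_simps)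
    finally show ?thesis by simp
  qed
  have hsa: "(\<Sum>i\<in>S. a i) \<le> lam * (1 - \<epsilon>) - 1 / \<alpha>"
  proof -
    have "\<alpha> * (\<Sum>i\<in>S. a i) \<le> \<alpha> * (lam * (1 - \<epsilon>) - 1 / \<alpha>)"
    proof -
      have "\<alpha> * (lam * (1 - \<epsilon>) - 1 / \<alpha>) = \<alpha> * lam - \<alpha> * lam * \<epsilon> - 1" using al0 by (simp add: field_simps)
      also have "\<dots> = \<alpha> * lam - sqrt d - 1" using alam by simp
      moreover have "\<alpha> * ((1 - 2 * \<epsilon>) * lam) = \<alpha> * lam - 2 * (\<alpha> * lam * \<epsilon>)" by (simp add: algebra_simps)
      ultimately show ?thesis using SA t_le hl alam by linarith
    qed
    thus ?thesis using al0 by simp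
  qed
  have hRO: "(\<Sum>i\<in>Ou. x i * r i) \<le> sqrt T * sqrt (\<Sum>i\<in>Ou. x i * a i)"
  proof -
    have xO: "\<And>i. i \<in> Ou \<Longrightarrow> 0 \<le> x i" using x_range by (auto simp: Ou_def)
    have "(\<Sum>i\<in>Ou. x i * r i) \<le> (\<Sum>i\<in>Ou. x i * (norm (v i) * norm (Bi *v v i)))"
      using xO by (intro sum_mono mult_left_mono) (auto simp: r_def norm_cauchy_schwarz)
    also have "\<dots> \<le> sqrt (\<Sum>i\<in>Ou. x i * (norm (v i))^2) * sqrt (\<Sum>i\<in>Ou. x i * (norm (Bi *v v i))^2)"
      using xO by (rule wcs)
    also have "(\<Sum>i\<in>Ou. x i * (norm (Bi *v v i))^2) = (\<Sum>i\<in>Ou. x i * a i)"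
      by (simp add: a_def power2_norm_eq_inner)
    also have "sqrt (\<Sum>i\<in>Ou. x i * (norm (v i))^2) * sqrt (\<Sum>i\<in>Ou. x i * a i) \<le> sqrt T * sqrt (\<Sum>i\<in>Ou. x i * a i)"
    proof (rule mult_right_mono)
      have "(\<Sum>i\<in>Ou. x i * (norm (v i))^2) \<le> (\<Sum>i<n. x i * (v i \<bullet> v i))"
        using split[of "\<lambda>i. x i * (v i \<bullet> v i)"] x_range S_sub
        by (simp add: power2_norm_eq_inner sum_nonneg subset_iff)
      thus "sqrt (\<Sum>i\<in>Ou. x i * (norm (v i))^2) \<le> sqrt T" by (simp add: Tsum)
      show "0 \<le> sqrt (\<Sum>i\<in>Ou. x i * a i)" using xO a_nn by (simp add: sum_nonneg)
    qed
    finally show ?thesis .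
  qed
  have hD: "q + E < real b - 2 * \<alpha> * (\<Sum>i\<in>S. r i)"
  proof -
    have lt: "l * t \<le> (1 - 2 * \<epsilon>) * d / \<epsilon>"
    proof (cases "0 \<le> l")
      case True
      have "l * t \<le> l * sqrt d" using True t_le by (simp add: mult_left_mono)
      also have "\<dots> \<le> (\<alpha> * ((1 - 2 * \<epsilon>) * lam)) * sqrt d" proof (rule mult_right_mono)
        show "l \<le> \<alpha> * ((1 - 2 * \<epsilon>) * lam)" using hl by linarith
      qed (use d1 in simp)
      also have "\<dots> = (1 - 2 * \<epsilon>) * (\<alpha> * lam * \<epsilon>) * sqrt d / \<epsilon>" using eps by (simp add: field_simps)
      also have "\<dots> = (1 - 2 * \<epsilon>) * d / \<epsilon>" using alam d1 by (simp add: real_sqrt_mult_self)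
      finally show ?thesis .
    next
      case False
      hence "l * t \<le> 0" using t0 by (simp add: mult_nonpos_nonneg)
      moreover have "0 \<le> (1 - 2 * \<epsilon>) * d / \<epsilon>" using eps d1 by simp
      ultimately show ?thesis by linarith
    qed
    have "2 * \<alpha> * (\<Sum>i\<in>S. r i) \<le> 2 * d / \<epsilon> - 2 * d"
    proof -
      have "2 * \<alpha> * (\<Sum>i\<in>S. r i) = 2 * (d + l * t)" using RS by simp
      also have "\<dots> \<le> 2 * (d + (1 - 2 * \<epsilon>) * d / \<epsilon>)" using lt by simp
      also have "\<dots> = 2 * d / \<epsilon> - 2 * d" using eps by (simp add: field_simps)
      finally show ?thesis .
    qed
    moreover have "real b \<ge> q + 2 * (d + d / \<epsilon>) + E"
      using b_large by (simp add: E_def d_def lam_def)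
    ultimately show ?thesis using d1 by simp
  qed
  have main: "\<exists>i\<in>{i\<in>S. 2 * \<alpha> * r i < 1}. \<exists>j\<in>Ou.
           a j / (1 + 2 * \<alpha> * r j) - a i / (1 - 2 * \<alpha> * r i) \<ge> \<epsilon> / real b * lam"
  proof (rule core[OF fS fO S_card a_nn r_nn _ _ al0 lam0 eps(1) hsa _ _ T0 hRO hE hD])
    show "\<And>i. i \<in> S \<Longrightarrow> 0 \<le> x i \<and> x i \<le> 1" using x_range S_sub by auto
    show "\<And>i. i \<in> Ou \<Longrightarrow> 0 \<le> x i" using x_range by (auto simp: Ou_def)
    show "lam \<le> (\<Sum>i\<in>S. x i * a i) + (\<Sum>i\<in>Ou. x i * a i)" using Nge' split[of "\<lambda>i. x i * a i"] by simp
    show "(\<Sum>i\<in>S. x i) + (\<Sum>i\<in>Ou. x i) = q" using x_sum split[of x] by simp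
  qed
  show ?thesis using main unfolding S'_def Phi_def ha hr Ou_def lam_def by simp
qed

end
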